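(* For all $\zeta\in\mathbb{C}$ with $|\Im\zeta|\le\pi/2$, \[ \frac{1}{\sqrt2}\left|\frac{e^\zeta}{1+e^\zeta}\right|\le\left|\frac{\operatorname{arcsinh}(e^\zeta)}{1+\operatorname{arcsinh}(e^\zeta)}\right|\le\sqrt2\left|\frac{e^\zeta}{1+e^\zeta}\right|, \] and for all $x\in\mathbb{R}$, $\frac{\operatorname{arcsinh}(e^x)}{1+\operatorname{arcsinh}(e^x)}\le\frac{e^x}{1+e^x}$.
   Context: $\operatorname{arcsinh}$ denotes the principal branch, $\operatorname{arcsinh}(w)=\log(w+\sqrt{1+w^2})$, extended continuously to the boundary $|\Im\zeta|=\pi/2$. *)

theory Defs
  imports "HOL-Analysis.Analysis"
begin

text \<open>The principal branch arcsinh(w) = log(w + sqrt(1+w^2)) is the library's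
  arsinh on complex numbers (principal Ln, principal square root via powr 1/2).\<close>

definition arcsinh_exp :: "complex \<Rightarrow> complex" where
  "arcsinh_exp \<zeta> =
     (if \<bar>Im \<zeta>\<bar> < pi / 2 then arsinh (exp \<zeta>)
      else Lim (at \<zeta> within {z. \<bar>Im z\<bar> < pi / 2}) (\<lambda>z. arsinh (exp z)))"

end

theory Submission
  imports Defs "HOL-Complex_Analysis.Complex_Analysis"
begin

lemma Re_sinh_c: "Re (sinh z) = sinh (Re z) * cos (Im z)" for z :: complex
  by (simp add: sinh_field_def sinh_def Re_exp Im_exp algebra_simps diff_divide_distrib[symmetric])

lemma Im_sinh_c: "Im (sinh z) = cosh (Re z) * sin (Im z)" for z :: complex
  by (simp add: sinh_field_def cosh_def Re_exp Im_exp algebra_simps add_divide_distrib[symmetric])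

lemma norm_sinh_sq: "cmod (sinh z) ^ 2 = sinh (Re z) ^ 2 + sin (Im z) ^ 2" for z :: complex
proof -
  have "cmod (sinh z) ^ 2 = (sinh (Re z) * cos (Im z))^2 + (cosh (Re z) * sin (Im z))^2"
    by (simp add: cmod_power2 Re_sinh_c Im_sinh_c)
  also have "\<dots> = sinh (Re z) ^ 2 + sin (Im z) ^ 2"
  proof -
    have e: "cosh (Re z) ^ 2 = sinh (Re z) ^ 2 + 1" by (rule cosh_square_eq)
    have f: "cos (Im z) ^ 2 = 1 - sin (Im z) ^ 2" by (simp add: cos_squared_eq)
    show ?thesis unfolding power_mult_distrib e f by (simp add: algebra_simps)
  qed
  finally show ?thesis .
qed


lemma arsinh_props:
  fixes w :: complex assumes "Re w > 0"
  shows "sinh (arsinh w) = w" "\<bar>Im (arsinh w)\<bar> < pi/2" "Re (arsinh w) > 0"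
proof -
  define r where "r = csqrt (w^2 + 1)"
  have r2: "r^2 = w^2 + 1" unfolding r_def by simp
  have ar: "arsinh w = Ln (w + r)"
    unfolding arsinh_def r_def by (simp add: csqrt_conv_powr)
  have "Re r \<ge> 0" unfolding r_def by (rule Re_csqrt)
  then have rev: "Re (w + r) > 0" using assms by simp
  then have nz: "w + r \<noteq> 0" by (metis zero_complex.simps(1) less_irrefl)
  have inv: "inverse (w + r) = r - w"
  proof -
    have "(w + r) * (r - w) = 1" using r2 by (simp add: algebra_simps power2_eq_square)
    then show ?thesis using nz by (simp add: inverse_unique)
  qed
  show s: "sinh (arsinh w) = w"
    unfolding ar sinh_field_def exp_minus exp_Ln[OF nz] inv by simp
  show im: "\<bar>Im (arsinh w)\<bar> < pi/2" unfolding ar by (rule Re_Ln_pos_lt_imp[OF rev])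
  have "cos (Im (arsinh w)) > 0" using im by (intro cos_gt_zero_pi) auto
  moreover have "Re (sinh (arsinh w)) > 0" using s assms by simp
  ultimately show "Re (arsinh w) > 0" unfolding Re_sinh_c
    by (simp add: zero_less_mult_iff)
qed

definition H :: "complex set" where "H = {a. 0 \<le> Re a \<and> \<bar>Im a\<bar> \<le> pi/2}"

lemma sinh_inj_H: "inj_on sinh H"
proof (rule inj_onI)
  fix a b assume a: "a \<in> H" and b: "b \<in> H" and e: "sinh a = sinh b"
  from e obtain n where n: "n \<in> \<int>" and
    c: "a = b - 2 * \<i> * of_real n * of_real pi \<or> a = -(2 * complex_of_real n + 1) * \<i> * complex_of_real pi - b"
    by (auto simp: sinh_complex_eq_iff)
  from n obtain m :: int where m: "n = of_int m" by (auto elim: Ints_cases)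
  from c show "a = b"
  proof
    assume h: "a = b - 2 * \<i> * of_real n * of_real pi"
    then have "Im a = Im b - 2 * n * pi" by simp
    moreover have "\<bar>Im a\<bar> \<le> pi/2" "\<bar>Im b\<bar> \<le> pi/2" using a b by (auto simp: H_def)
    ultimately have "\<bar>2 * n * pi\<bar> \<le> pi" unfolding abs_le_iff by linarith
    then have "\<bar>2 * n\<bar> * pi \<le> 1 * pi" by (simp add: abs_mult)
    then have "\<bar>2 * n\<bar> \<le> 1" by (simp add: mult_le_cancel_right)
    then have "m = 0" unfolding m by linarith
    then show "a = b" using h m by simp
  next
    assume h: "a = -(2 * complex_of_real n + 1) * \<i> * complex_of_real pi - b"
    have re: "Re a = - Re b" using arg_cong[OF h, of Re] by simp
    have im: "Im a = -(2*n+1)*pi - Im b" using arg_cong[OF h, of Im] by (simp add: algebra_simps)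
    have "Re a = 0" "Re b = 0" using re a b by (auto simp: H_def)
    moreover have "\<bar>Im a\<bar> \<le> pi/2" "\<bar>Im b\<bar> \<le> pi/2" using a b by (auto simp: H_def)
    ultimately have "\<bar>(2*n+1)*pi\<bar> \<le> 1 * pi" using im unfolding abs_le_iff by (simp add: algebra_simps)
    then have "\<bar>2*n+1\<bar> \<le> 1" by (simp add: abs_mult mult_le_cancel_right)
    then have "m = 0 \<or> m = -1" unfolding m by linarith
    then have "Im a = Im b" using im a b m by (auto simp: H_def)
    then show "a = b" using \<open>Re a = 0\<close> \<open>Re b = 0\<close> by (simp add: complex_eq_iff)
  qed
qed

lemma pi_bnds: "314159/100000 \<le> pi" "pi \<le> 3927/1250"
proof -
  show "314159/100000 \<le> pi" using pi_approx(1) by simp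
  show "pi \<le> 3927/1250" using pi_approx(2) by simp
qed

lemma cosh_lower: "1 + s^2/2 \<le> cosh (s::real)"
proof -
  have "\<bar>s/2\<bar> \<le> \<bar>sinh (s/2)\<bar>" using real_le_abs_sinh[of "s/2"] by (simp add: sinh_def exp_minus)
  then have "(s/2)^2 \<le> sinh (s/2) ^ 2" by (metis abs_le_square_iff)
  moreover have "cosh s = 1 + 2 * sinh (s/2) ^ 2"
    using cosh_double[of "s/2"] cosh_square_eq[of "s/2"] by simp
  ultimately show ?thesis by (simp add: power2_eq_square)
qed

lemma cosh2_le: "cosh (2::real) \<le> 4"
proof -
  have "exp (1::real) - 5837465777 / 2147483648 \<le> inverse (2^32)" using e_approx_32 by (rule abs_le_D1)
  then have e: "exp (1::real) \<le> 2.7183" by simp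
  have "exp (2::real) = exp 1 * exp 1" by (simp add: exp_add[symmetric])
  also have "\<dots> \<le> 2.7183 * 2.7183" using e by (intro mult_mono) auto
  finally have e2: "exp (2::real) \<le> 2.7183 * 2.7183" .
  have "3 \<le> exp (2::real)" using exp_ge_add_one_self[of "2::real"] by simp
  then have "exp (-2::real) \<le> 1/3" by (simp add: exp_minus field_simps)
  then show ?thesis using e2 by (simp add: cosh_def)
qed

lemma quad_max:
  fixes D p K l u h :: real
  assumes "l \<le> u" "u \<le> h" "0 \<le> D"
  shows "D*u^2 - p*u + K \<le> max (D*l^2 - p*l + K) (D*h^2 - p*h + K)"
proof -
  have "(u - l) * (h - u) \<ge> 0" using assms by simp
  then have "D * ((u - l) * (h - u)) \<ge> 0" using assms by simp
  then have a: "D*u^2 \<le> D*(u*(l+h) - l*h)" by (simp add: algebra_simps power2_eq_square)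
  show ?thesis
  proof (cases "l = h")
    case True then show ?thesis using assms by simp
  next
    case False
    then have lh: "l < h" using assms by simp
    define t where "t = (u - l)/(h - l)"
    have t0: "0 \<le> t" "t \<le> 1" using assms lh by (auto simp: t_def field_simps)
    have ut: "u = l + t*(h-l)" using lh by (simp add: t_def field_simps)
    have "D*(u*(l+h) - l*h) - p*u + K = (1-t)*(D*l^2 - p*l + K) + t*(D*h^2 - p*h + K)"
      unfolding ut by (simp add: algebra_simps power2_eq_square)
    also have "\<dots> \<le> (1-t)*max (D*l^2 - p*l + K) (D*h^2 - p*h + K) + t*max (D*l^2 - p*l + K) (D*h^2 - p*h + K)"
      using t0 by (intro add_mono mult_left_mono) auto
    also have "\<dots> = max (D*l^2 - p*l + K) (D*h^2 - p*h + K)" by (simp add: algebra_simps)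
    finally show ?thesis using a by linarith
  qed
qed

lemma aux_id: "(D*h^2 - p*h + K) * m^2 = D*(h*m)^2 - p*(h*m)*m + K*m^2" for D h p K m :: real
  by (simp add: power2_eq_square algebra_simps)

definition cc :: real where "cc = 2071/5000"

lemma Qh_neg:
  fixes s :: real
  defines "D \<equiv> s^2 + pi^2/4"
  defines "h \<equiv> 1/(1 + s^2/2)"
  shows "D*h^2 - pi*h + (1 - cc^2*D) \<le> 0"
proof -
  define y where "y = s^2"
  define kk where "kk = pi^2/4"
  have y0: "0 \<le> y" by (simp add: y_def)
  have kb: "9.8695/4 \<le> kk" "kk \<le> 9.8697/4"
  proof -
    have "3.14159*3.14159 \<le> pi*pi" using pi_bnds by (intro mult_mono) auto
    moreover have "pi*pi \<le> 3.1416*3.1416" using pi_bnds by (intro mult_mono) auto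
    ultimately show "9.8695/4 \<le> kk" "kk \<le> 9.8697/4" by (auto simp: kk_def power2_eq_square)
  qed
  have Dy: "D = y + kk" by (simp add: D_def y_def kk_def)
  have hp: "1 + y/2 > 0" using y0 by simp
  define P where "P = (kk - pi + 1 - cc^2*kk) + y*(2 - pi/2 - cc^2*kk - cc^2) + y^2*((1 - cc^2*kk)/4 - cc^2) + y^3*(- (cc^2)/4)"
  have A: "kk - pi + 1 - cc^2*kk \<le> 0" using kb pi_bnds by (simp add: cc_def power2_eq_square; linarith)
  have B: "2 - pi/2 - cc^2*kk - cc^2 \<le> 0" using kb pi_bnds by (simp add: cc_def power2_eq_square; linarith)
  have C: "(1 - cc^2*kk)/4 - cc^2 \<le> 0" using kb pi_bnds by (simp add: cc_def power2_eq_square; linarith)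
  have E: "- (cc^2)/4 \<le> (0::real)" by simp
  have "P \<le> 0" unfolding P_def using A B C E y0
    by (intro add_nonpos_nonpos mult_nonneg_nonpos) auto
  have hm: "h * (1 + y/2) = 1" using hp by (simp add: h_def y_def)
  have "(D*h^2 - pi*h + (1 - cc^2*D)) * (1 + y/2)^2 = D*(h*(1 + y/2))^2 - pi*(h*(1+y/2))*(1+y/2) + (1 - cc^2*D)*(1+y/2)^2"
    by (rule aux_id)
  also have "\<dots> = P" unfolding hm P_def Dy by (simp add: power2_eq_square power3_eq_cube field_simps)
  finally have "(D*h^2 - pi*h + (1 - cc^2*D)) * (1 + y/2)^2 = P" .
  with \<open>P \<le> 0\<close> hp show ?thesis
    by (metis mult_pos_pos not_le zero_less_power)
qed

lemma top_real:
  fixes s :: real assumes s0: "0 \<le> s"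
  defines "D \<equiv> s^2 + pi^2/4"
  shows "(s/D)^2 + (pi/(2*D) - 1/cosh s)^2 \<le> cc^2"
proof -
  define u where "u = 1/cosh s"
  define h where "h = 1/(1 + s^2/2)"
  have kb: "9.8695/4 \<le> pi^2/4"
  proof -
    have "3.14159*3.14159 \<le> pi*pi" using pi_bnds by (intro mult_mono) auto
    then show ?thesis by (simp add: power2_eq_square)
  qed
  have Dpos: "D > 0" unfolding D_def by (simp add: add_nonneg_pos)
  have Dge: "D \<ge> s^2 + 9.8695/4" unfolding D_def using kb by simp
  have u0: "0 \<le> u" by (simp add: u_def)
  have uh: "u \<le> h" unfolding u_def h_def
    using cosh_lower[of s] by (intro divide_left_mono) (auto simp: add_pos_nonneg)
  have Qh: "D*h^2 - pi*h + (1 - cc^2*D) \<le> 0" unfolding D_def h_def by (rule Qh_neg)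
  have Q: "D*u^2 - pi*u + (1 - cc^2*D) \<le> 0"
  proof (cases "s \<le> 2")
    case True
    have "cosh s \<le> cosh 2" using True s0 by (simp add: cosh_real_nonneg_le_iff)
    then have "cosh s \<le> 4" using cosh2_le by linarith
    then have ul: "1/4 \<le> u" unfolding u_def by (intro divide_left_mono) auto
    have e1: "D*(1/4)^2 - pi*(1/4) + (1 - cc^2*D) = D*(1/16 - cc^2) + (1 - pi/4)"
      by (simp add: algebra_simps power2_eq_square)
    have e2: "1/16 - cc^2 \<le> -0.109" by (simp add: cc_def power2_eq_square)
    have "D \<ge> 9.8695/4" using Dge zero_le_power2[of s] by linarith
    then have "D*(1/16 - cc^2) \<le> (9.8695/4)*(1/16 - cc^2)" using e2 by (intro mult_right_mono_neg) auto
    also have "\<dots> \<le> (9.8695/4)*(-0.109)" using e2 by (intro mult_left_mono) auto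
    finally have Ql: "D*(1/4)^2 - pi*(1/4) + (1 - cc^2*D) \<le> 0" unfolding e1 using pi_bnds by simp
    show ?thesis using quad_max[OF ul uh, of D pi "1 - cc^2*D"] Dpos Ql Qh by simp
  next
    case False
    then have "s^2 \<ge> 2^2" using s0 by (intro power_mono) auto
    then have Ql: "D*0^2 - pi*0 + (1 - cc^2*D) \<le> 0"
    proof -
      have e2: "cc^2 \<ge> 0.17" by (simp add: cc_def power2_eq_square)
      have "D \<ge> 4 + 9.8695/4" using Dge \<open>s^2 \<ge> 2^2\<close> by simp
      then have "cc^2 * D \<ge> 0.17 * (4 + 9.8695/4)" using e2 by (intro mult_mono) auto
      then show ?thesis by simp
    qed
    show ?thesis using quad_max[OF u0 uh, of D pi "1 - cc^2*D"] Dpos Ql Qh by simp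
  qed
  have Dd: "s^2 + pi^2/4 = D" by (simp add: D_def)
  have "(s/D)^2 + (pi/(2*D) - u)^2 = (s^2 + pi^2/4)/(D*D) - pi*u/D + u^2"
    using Dpos by (simp add: power2_eq_square field_simps)
  also have "\<dots> = 1/D - pi*u/D + u^2" unfolding Dd using Dpos by simp
  also have "\<dots> = (D*u^2 - pi*u + (1 - cc^2*D))/D + cc^2"
    using Dpos by (simp add: field_simps)
  also have "\<dots> \<le> cc^2" using Q Dpos by (simp add: divide_nonpos_pos)
  finally show ?thesis by (simp add: u_def)
qed

lemma sin_taylor_lower:
  fixes t :: real
  shows "t - t^3/6 + t^5/120 - t^7/5040 - \<bar>t\<bar>^9/40320 \<le> sin t"
proof -
  have "norm(sin (complex_of_real t) - (\<Sum>k\<le>8. complex_of_real (sin_coeff k) * (complex_of_real t) ^ k))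
     \<le> exp\<bar>Im (complex_of_real t)\<bar> * (norm (complex_of_real t)) ^ (Suc 8) / (fact 8)"
    by (rule Taylor_sin)
  also have "(\<Sum>k\<le>8. complex_of_real (sin_coeff k) * (complex_of_real t) ^ k) = complex_of_real (\<Sum>k\<le>8. sin_coeff k * t ^ k)"
    by simp
  also have "(\<Sum>k\<le>8. sin_coeff k * t ^ k) = t - t^3/6 + t^5/120 - t^7/5040"
    by (simp add: sin_coeff_def atMost_nat_numeral fact_numeral)
  also have "sin (complex_of_real t) - complex_of_real (t - t^3/6 + t^5/120 - t^7/5040)
      = complex_of_real (sin t - (t - t^3/6 + t^5/120 - t^7/5040))"
    by (simp only: of_real_diff sin_of_real)
  finally have "\<bar>sin t - (t - t^3/6 + t^5/120 - t^7/5040)\<bar> \<le> \<bar>t\<bar>^9/40320"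
    by (simp only: norm_of_real) (simp add: fact_numeral)
  then show ?thesis by linarith
qed

lemma left_poly:
  fixes t :: real assumes t0: "0 < t" and t1: "t \<le> pi/2"
  shows "t \<le> (t - t^3/6 + t^5/120 - t^7/5040 - t^9/40320) * (1 + cc*t)"
proof -
  have tb: "t \<le> (3927/2500)" using t1 pi_bnds by linarith
  have t2: "t^2 \<le> (987/400)"
  proof -
    have "t^2 \<le> (3927/2500)^2" using tb t0 by (intro power_mono) auto
    then show ?thesis by (simp add: power2_eq_square)
  qed
  define M :: real where "M = (987/400)"
  have t2M: "t^2 \<le> M" using t2 by (simp add: M_def)
  have p6: "t^6 \<le> M * t^4" using mult_right_mono[OF t2M, of "t^4"] t0
    by (simp add: power_add[symmetric] mult.commute)
  have p8: "t^8 \<le> M^2 * t^4"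
  proof -
    have "t^4 \<le> M^2" using power_mono[OF t2M, of 2] t0 by (simp add: power_mult[symmetric])
    then show ?thesis using mult_right_mono[of "t^4" "M^2" "t^4"] t0
      by (simp add: power_add[symmetric])
  qed
  have p7: "t^7 \<le> M * t^5" using mult_right_mono[OF t2M, of "t^5"] t0
    by (simp add: power_add[symmetric] mult.commute)
  have p9: "t^9 \<le> M^2 * t^5"
  proof -
    have "t^4 \<le> M^2" using power_mono[OF t2M, of 2] t0 by (simp add: power_mult[symmetric])
    then show ?thesis using mult_right_mono[of "t^4" "M^2" "t^5"] t0
      by (simp add: power_add[symmetric])
  qed
  define k :: real where "k = 76/10000"
  have f: "0 \<le> cc - t/6 - cc*t^2/6 + k*t^3 + cc*k*t^4"
  proof (cases "t \<le> 7/5")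
    case True
    have "t^2 \<le> (7/5)^2" using True t0 by (intro power_mono) auto
    then have "t^2 \<le> 49/25" by (simp add: power2_eq_square)
    moreover have "0 \<le> t^3" "0 \<le> t^4" using t0 by auto
    ultimately show ?thesis using True unfolding cc_def k_def by linarith
  next
    case False
    have "(7/5)^3 \<le> t^3" using False by (intro power_mono) auto
    then have "343/125 \<le> t^3" by (simp add: power3_eq_cube)
    moreover have "0 \<le> t^4" using t0 by auto
    ultimately show ?thesis using tb t2 unfolding cc_def k_def by linarith
  qed
  have "0 \<le> t^2 * (cc - t/6 - cc*t^2/6 + k*t^3 + cc*k*t^4)" using f by simp
  also have "t^2 * (cc - t/6 - cc*t^2/6 + k*t^3 + cc*k*t^4) = cc*t^2 - t^3/6 - cc*t^4/6 + k*t^5 + cc*k*t^6"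
    by (simp add: algebra_simps power_add[symmetric] numeral_eq_Suc)
  finally have g: "0 \<le> cc*t^2 - t^3/6 - cc*t^4/6 + k*t^5 + cc*k*t^6" .
  have e: "(t - t^3/6 + t^5/120 - t^7/5040 - t^9/40320) * (1 + cc*t) - t =
     cc*t^2 - t^3/6 - cc*t^4/6 + t^5/120 + cc*t^6/120 - t^7/5040 - cc*t^8/5040 - t^9/40320 - cc*t^10/40320"
    by (simp add: field_simps eval_nat_numeral)
  have q1: "t^7 \<le> M * t^5" by (rule p7)
  have q2: "t^9 \<le> M^2 * t^5" by (rule p9)
  have q3: "cc*t^8 \<le> cc*(M * t^6)"
  proof -
    have "t^8 \<le> M * t^6" using mult_right_mono[OF t2M, of "t^6"] t0 by (simp add: power_add[symmetric] mult.commute)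
    then show ?thesis by (simp add: cc_def)
  qed
  have q4: "cc*t^10 \<le> cc*(M^2 * t^6)"
  proof -
    have "t^4 \<le> M^2" using power_mono[OF t2M, of 2] t0 by (simp add: power_mult[symmetric])
    then have "t^10 \<le> M^2 * t^6" using mult_right_mono[of "t^4" "M^2" "t^6"] t0 by (simp add: power_add[symmetric])
    then show ?thesis by (simp add: cc_def)
  qed
  have t56: "0 \<le> t^5" "0 \<le> t^6" using t0 by auto
  show ?thesis using e g q1 q2 q3 q4 by (simp add: M_def k_def cc_def power2_eq_square) (use t56 in linarith)
qed

lemma left_real:
  fixes t :: real assumes t0: "0 < t" and t1: "t \<le> pi/2"
  shows "0 \<le> 1/sin t - 1/t" "1/sin t - 1/t \<le> cc"
proof -
  have tp: "t < pi" using t1 pi_gt_zero by linarith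
  have s0: "0 < sin t" using t0 tp by (rule sin_gt_zero)
  have st: "sin t \<le> t" using t0 by (simp add: sin_x_le_x)
  show "0 \<le> 1/sin t - 1/t" using s0 st t0 by (simp add: frac_le)
  have L: "t - t^3/6 + t^5/120 - t^7/5040 - t^9/40320 \<le> sin t"
    using sin_taylor_lower[of t] t0 by simp
  have "t \<le> (t - t^3/6 + t^5/120 - t^7/5040 - t^9/40320) * (1 + cc*t)" by (rule left_poly[OF t0 t1])
  also have "\<dots> \<le> sin t * (1 + cc*t)" using L t0 by (intro mult_right_mono) (auto simp: cc_def)
  finally have "t \<le> sin t * (1 + cc*t)" .
  then show "1/sin t - 1/t \<le> cc" using s0 t0 by (simp add: field_simps)
qed

lemma sinh_nz: fixes z :: complex assumes "z \<noteq> 0" "\<bar>Im z\<bar> < pi" shows "sinh z \<noteq> 0"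
proof
  assume "sinh z = 0"
  then have "sinh (Re z) ^ 2 + sin (Im z) ^ 2 = 0" using norm_sinh_sq[of z] by simp
  then have "sinh (Re z) = 0" "sin (Im z) = 0" by (simp_all add: add_nonneg_eq_0_iff)
  then have "Re z = 0" "Im z = 0" using sin_zero_pi_iff[OF assms(2)] by auto
  then show False using assms(1) by (simp add: complex_eq_iff)
qed

lemma inv_i_mult: "1/(\<i> * w) = - \<i> / w" for w :: complex
  by (cases "w = 0") (simp_all add: field_simps)

lemma inv_i_diff: "1/(\<i> * complex_of_real a) - 1/(\<i> * complex_of_real b) = - \<i> * complex_of_real (1/a - 1/b)"
  unfolding inv_i_mult by (simp add: diff_divide_distrib algebra_simps)

lemma left_edge:
  fixes t :: real assumes "t \<noteq> 0" "\<bar>t\<bar> \<le> pi/2"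
  shows "cmod (1/sinh (Complex 0 t) - 1/Complex 0 t) \<le> cc"
proof -
  have r1: "Re (sinh (Complex 0 t)) = 0" by (simp add: Re_sinh_c)
  have r2: "Im (sinh (Complex 0 t)) = sin t" by (simp add: Im_sinh_c)
  have sh: "sinh (Complex 0 t) = \<i> * complex_of_real (sin t)" using r1 r2 by (simp add: complex_eq_iff)
  have z: "Complex 0 t = \<i> * complex_of_real t" by (simp add: complex_eq_iff)
  have eq: "1/sinh (Complex 0 t) - 1/Complex 0 t = - \<i> * complex_of_real (1/sin t - 1/t)"
    unfolding sh unfolding z by (rule inv_i_diff)
  have n: "cmod (1/sinh (Complex 0 t) - 1/Complex 0 t) = \<bar>1/sin t - 1/t\<bar>"
    unfolding eq norm_mult norm_minus_cancel norm_ii norm_of_real by simp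
  show ?thesis
  proof (cases "t > 0")
    case True
    then show ?thesis unfolding n using left_real[OF True] assms by simp
  next
    case False
    then have t': "0 < -t" "-t \<le> pi/2" using assms by auto
    have "\<bar>1/sin t - 1/t\<bar> = \<bar>1/sin (-t) - 1/(-t)\<bar>" by (simp add: abs_minus_commute)
    then show ?thesis unfolding n using left_real[OF t'] by simp
  qed
qed

lemma top_edge:
  fixes s b :: real assumes s0: "0 \<le> s" and b: "b = pi/2 \<or> b = -pi/2"
  shows "cmod (1/sinh (Complex s b) - 1/Complex s b) \<le> cc"
proof -
  define D where "D = s^2 + pi^2/4"
  define C where "C = cosh s"
  define \<sigma> :: real where "\<sigma> = (if b = pi/2 then 1 else -1)"
  have sg: "\<sigma> = 1 \<or> \<sigma> = -1" by (simp add: \<sigma>_def)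
  have bs: "b = \<sigma> * (pi/2)" using b by (elim disjE) (simp_all add: \<sigma>_def)
  have sinb: "sin b = \<sigma>" unfolding bs using sg by (elim disjE) simp_all
  have cosb: "cos b = 0" unfolding bs using sg by (elim disjE) simp_all
  have Cp: "C > 0" by (simp add: C_def)
  have Dp: "D > 0" by (simp add: D_def add_nonneg_pos)
  have "b^2 = pi^2/4" unfolding bs using sg by (elim disjE) (simp_all add: power_mult_distrib power_divide)
  then have b2: "s^2 + b^2 = D" by (simp add: D_def)
  have r1: "Re (sinh (Complex s b)) = 0" by (simp add: Re_sinh_c cosb)
  have r2: "Im (sinh (Complex s b)) = \<sigma> * C" by (simp add: Im_sinh_c sinb C_def)
  have sh: "sinh (Complex s b) = Complex 0 (\<sigma> * C)" using r1 r2 by (simp add: complex_eq_iff)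
  have re: "Re (1/sinh (Complex s b) - 1/Complex s b) = - s / D"
    unfolding sh using b2 by (simp add: Re_divide power2_eq_square)
  have im: "Im (1/sinh (Complex s b) - 1/Complex s b) = \<sigma> * (pi/(2*D) - 1/C)"
  proof -
    have "Im (1/sinh (Complex s b) - 1/Complex s b) = - (\<sigma>*C)/((\<sigma>*C)^2) + b/D"
      unfolding sh using b2 by (simp add: Im_divide power2_eq_square)
    also have "(\<sigma>*C)^2 = C^2" using sg by auto
    also have "- (\<sigma>*C)/C^2 = - \<sigma> / C" using Cp by (simp add: power2_eq_square)
    also have "b/D = \<sigma> * (pi/(2*D))" unfolding bs by simp
    finally show ?thesis by (simp add: algebra_simps)
  qed
  have "cmod (1/sinh (Complex s b) - 1/Complex s b) ^ 2 = (s/D)^2 + (pi/(2*D) - 1/cosh s)^2"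
  proof -
    have "\<sigma>^2 = 1" using sg by auto
    then show ?thesis unfolding cmod_power2 re im by (simp add: C_def power_mult_distrib)
  qed
  also have "\<dots> \<le> cc^2" unfolding D_def by (rule top_real[OF s0])
  finally show ?thesis by (rule power2_le_imp_le) (simp add: cc_def)
qed


lemma a1: "0 \<le> x \<Longrightarrow> x \<le> sinh x" for x :: real
  using real_le_x_sinh[of x] by (simp add: sinh_field_def exp_minus)
lemma a2: "(x::real) \<le> y \<Longrightarrow> 0 \<le> x \<Longrightarrow> x^2 \<le> y^2 + w^2"
proof -
  assume "x \<le> y" "0 \<le> x"
  then have "x^2 \<le> y^2" by (intro power_mono) auto
  then show ?thesis using zero_le_power2[of w] by linarith
qed
lemma a3: "(1::real) / a \<le> 1/5" if "5 \<le> a" using that by (intro divide_left_mono) auto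
lemma right_region:
  fixes z :: complex assumes "5 \<le> Re z"
  shows "cmod (1/sinh z - 1/z) \<le> cc"
proof -
  have r0: "0 \<le> Re z" using assms by simp
  have "(Re z)^2 \<le> sinh (Re z)^2 + sin (Im z)^2" using a2[OF a1[OF r0] r0] .
  then have "(Re z)^2 \<le> cmod (sinh z)^2" by (subst norm_sinh_sq)
  then have s5: "Re z \<le> cmod (sinh z)" by (rule power2_le_imp_le) simp
  have z5: "Re z \<le> cmod z" by (rule complex_Re_le_cmod)
  have "cmod (1/sinh z - 1/z) \<le> cmod (1/sinh z) + cmod (1/z)" by (rule norm_triangle_ineq4)
  also have "cmod (1/sinh z) = 1/cmod (sinh z)" by (simp only: norm_divide norm_one)
  also have "1/cmod (sinh z) \<le> 1/5" using s5 assms by (intro a3) linarith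
  also have "cmod (1/z) = 1/cmod z" by (simp only: norm_divide norm_one)
  also have "1/cmod z \<le> 1/5" using z5 assms by (intro a3) linarith
  finally show ?thesis by (simp add: cc_def)
qed

lemma sinh_holo: "sinh holomorphic_on (S::complex set)"
proof -
  have "\<And>x::complex. (sinh has_field_derivative cosh x) (at x)" by (auto intro!: derivative_eq_intros)
  then show ?thesis by (meson field_differentiable_at_within field_differentiable_def holomorphic_on_def)
qed

lemma g_limit: "\<exists>L. ((\<lambda>y::complex. 1/sinh y - 1/y) \<longlongrightarrow> L) (at 0)"
proof -
  have ds: "(sinh has_field_derivative 1) (at (0::complex))"
    by (auto intro!: derivative_eq_intros)
  then have l1: "((\<lambda>y::complex. sinh y / y) \<longlongrightarrow> 1) (at 0)"
    by (simp add: has_field_derivative_iff)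
  define hh where "hh = (\<lambda>y::complex. if y = 0 then 1 else sinh y / y)"
  have "(\<lambda>y::complex. sinh y / y) holomorphic_on UNIV - {0}"
    by (intro holomorphic_intros sinh_holo) auto
  from removable_singularity[OF this open_UNIV l1]
  have hol: "hh holomorphic_on UNIV" by (simp add: hh_def)
  then have "hh field_differentiable (at 0)" by (rule holomorphic_on_imp_differentiable_at) auto
  then obtain D' where "(hh has_field_derivative D') (at 0)" by (auto simp: field_differentiable_def)
  then have l2: "((\<lambda>y. (hh y - 1) / y) \<longlongrightarrow> D') (at 0)"
    by (simp add: has_field_derivative_iff hh_def)
  have "continuous_on UNIV hh" using hol by (rule holomorphic_on_imp_continuous_on)
  then have "isCont hh 0" by (simp add: continuous_on_eq_continuous_at)
  then have l3: "(hh \<longlongrightarrow> 1) (at 0)" by (simp add: isCont_def hh_def)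
  have l4: "((\<lambda>y. - ((hh y - 1) / y) / hh y) \<longlongrightarrow> - D' / 1) (at 0)"
    by (intro tendsto_intros l2 l3) simp
  have ev: "eventually (\<lambda>y. - ((hh y - 1) / y) / hh y = 1/sinh y - 1/y) (at (0::complex))"
  proof -
    have "eventually (\<lambda>y::complex. y \<in> ball 0 1 - {0}) (at 0)"
      by (intro eventually_at_in_open) auto
    then show ?thesis
    proof eventually_elim
      case (elim y)
      have y0: "y \<noteq> 0" and y1: "cmod y < 1" using elim by auto
      have "\<bar>Im y\<bar> < pi" using y1 abs_Im_le_cmod[of y] pi_gt3 by linarith
      then have sn: "sinh y \<noteq> 0" using sinh_nz y0 by blast
      show ?case using y0 sn by (simp add: hh_def field_simps)
    qed
  qed
  show ?thesis using Lim_transform_eventually[OF l4 ev] by blast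
qed

lemma main_bound:
  fixes a :: complex assumes a0: "a \<noteq> 0" and re: "0 \<le> Re a" and im: "\<bar>Im a\<bar> \<le> pi/2"
  shows "cmod (1/sinh a - 1/a) \<le> cc"
proof (cases "5 \<le> Re a")
  case True then show ?thesis by (rule right_region)
next
  case False
  obtain L where L: "((\<lambda>y::complex. 1/sinh y - 1/y) \<longlongrightarrow> L) (at 0)" using g_limit by blast
  define G where "G = (\<lambda>y::complex. if y = 0 then L else 1/sinh y - 1/y)"
  define A where "A = {z::complex. \<bar>Im z\<bar> < 3}"
  have oA: "open A" unfolding A_def by (intro open_Collect_less continuous_intros)
  have "(\<lambda>y::complex. 1/sinh y - 1/y) holomorphic_on A - {0}"
  proof (intro holomorphic_intros sinh_holo)
    fix y assume "y \<in> A - {0}"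
    then have "y \<noteq> 0" "\<bar>Im y\<bar> < pi" using pi_gt3 by (auto simp: A_def)
    then show "sinh y \<noteq> 0" "y \<noteq> 0" using sinh_nz by auto
  qed
  from removable_singularity[OF this oA L]
  have holG: "G holomorphic_on A" by (simp add: G_def)
  define S where "S = cbox (Complex 0 (-pi/2)) (Complex 5 (pi/2))"
  have SA: "S \<subseteq> A" unfolding S_def A_def using pi_gt3 pi_less_4
    by (auto simp: in_cbox_complex_iff abs_le_iff)
  have cS: "closure S = S" unfolding S_def by simp
  have contG: "continuous_on A G" using holG by (rule holomorphic_on_imp_continuous_on)
  have L0: "cmod L \<le> cc"
  proof -
    have "isCont G 0" using contG oA by (simp add: continuous_on_eq_continuous_at A_def)
    moreover have "((\<lambda>t::real. Complex 0 t) \<longlongrightarrow> 0) (at_right 0)"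
    proof -
      have "((\<lambda>t::real. \<i> * complex_of_real t) \<longlongrightarrow> \<i> * complex_of_real 0) (at_right 0)"
        by (intro tendsto_intros)
      moreover have "(\<lambda>t::real. Complex 0 t) = (\<lambda>t. \<i> * complex_of_real t)" by (auto simp: complex_eq_iff)
      ultimately show ?thesis by simp
    qed
    ultimately have lim: "((\<lambda>t. G (Complex 0 t)) \<longlongrightarrow> G 0) (at_right 0)" by (rule isCont_tendsto_compose)
    have "eventually (\<lambda>t::real. t \<in> {0<..<pi/2}) (at_right 0)"
      by (intro eventually_at_right_real) auto
    then have ev: "eventually (\<lambda>t. cmod (G (Complex 0 t)) \<le> cc) (at_right 0)"
    proof eventually_elim
      case (elim t)
      then have "t \<noteq> 0" "\<bar>t\<bar> \<le> pi/2" by auto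
      moreover have "Complex 0 t \<noteq> 0" using \<open>t \<noteq> 0\<close> by (simp add: complex_eq_iff)
      ultimately show ?case using left_edge by (simp add: G_def)
    qed
    have "cmod (G 0) \<le> cc" by (rule Lim_norm_ubound[OF _ lim ev]) simp
    then show ?thesis by (simp add: G_def)
  qed
  have bnd: "cmod (G z) \<le> cc" if "z \<in> frontier S" for z
  proof (cases "z = 0")
    case True then show ?thesis using L0 by (simp add: G_def)
  next
    case z0: False
    have zS: "z \<in> S" and znb: "z \<notin> box (Complex 0 (-pi/2)) (Complex 5 (pi/2))"
      using that unfolding S_def frontier_cbox by auto
    have c: "0 \<le> Re z" "Re z \<le> 5" "-pi/2 \<le> Im z" "Im z \<le> pi/2"
      using zS by (auto simp: S_def in_cbox_complex_iff)
    have "Re z = 0 \<or> Re z = 5 \<or> Im z = pi/2 \<or> Im z = -pi/2"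
      using znb c by (auto simp: in_box_complex_iff)
    moreover have Gz: "G z = 1/sinh z - 1/z" using z0 by (simp add: G_def)
    moreover have zc: "z = Complex (Re z) (Im z)" by simp
    ultimately consider "Re z = 0" | "Re z = 5" | "Im z = pi/2 \<or> Im z = -pi/2" by blast
    then show ?thesis
    proof cases
      case 1
      then have "Im z \<noteq> 0" using z0 by (auto simp: complex_eq_iff)
      moreover have "\<bar>Im z\<bar> \<le> pi/2" using c by auto
      ultimately have "cmod (1/sinh (Complex 0 (Im z)) - 1/Complex 0 (Im z)) \<le> cc" by (rule left_edge)
      then show ?thesis using Gz 1 zc by metis
    next
      case 2 then show ?thesis using Gz right_region[of z] by simp
    next
      case 3
      have "cmod (1/sinh (Complex (Re z) (Im z)) - 1/Complex (Re z) (Im z)) \<le> cc"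
        by (rule top_edge[OF c(1) 3])
      then show ?thesis using Gz zc by metis
    qed
  qed
  have aS: "a \<in> S" using False re im by (auto simp: S_def in_cbox_complex_iff abs_le_iff)
  have h1: "G holomorphic_on interior S" using holG SA interior_subset by (meson holomorphic_on_subset order_trans)
  have h2: "continuous_on (closure S) G" unfolding cS using contG SA by (rule continuous_on_subset)
  have h3: "bounded S" by (simp add: S_def)
  have "cmod (G a) \<le> cc" by (rule maximum_modulus_frontier[OF h1 h2 h3 bnd aS])
  then show ?thesis using a0 by (simp add: G_def)
qed

lemma sqrt2_ge: "1 + cc \<le> sqrt 2"
  by (rule real_le_rsqrt) (simp add: cc_def power2_eq_square)

lemma cmod_frac: "cmod (a/(1+a)) = 1 / cmod (1 + 1/a)" if "a \<noteq> 0" for a :: complex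
proof -
  have "a/(1+a) = 1/(1 + 1/a)" using that by (simp add: field_simps)
  then show ?thesis by (simp add: norm_divide)
qed

lemma one_plus_ge: "1 \<le> cmod (1 + p)" if "0 \<le> Re p" for p :: complex
proof -
  have "Re (1 + p) \<le> cmod (1 + p)" by (rule complex_Re_le_cmod)
  then show ?thesis using that by simp
qed

lemma ineq_H:
  fixes a :: complex assumes a0: "a \<noteq> 0" and re: "0 \<le> Re a" and im: "\<bar>Im a\<bar> \<le> pi/2"
  defines "w \<equiv> sinh a"
  shows "(1 / sqrt 2) * cmod (w/(1+w)) \<le> cmod (a/(1+a)) \<and> cmod (a/(1+a)) \<le> sqrt 2 * cmod (w/(1+w))"
proof -
  have "\<bar>Im a\<bar> < pi" using im pi_gt_zero by linarith
  then have w0: "w \<noteq> 0" unfolding w_def using a0 by (intro sinh_nz) auto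
  have "0 \<le> cos (Im a)" using im by (intro cos_ge_zero) auto
  then have rw: "0 \<le> Re w" unfolding w_def Re_sinh_c using re by simp
  define p where "p = 1/w"
  define q where "q = 1/a"
  have rp: "0 \<le> Re p" unfolding p_def using rw by (simp add: Re_divide)
  have rq: "0 \<le> Re q" unfolding q_def using re by (simp add: Re_divide)
  have pq: "cmod (p - q) \<le> cc" unfolding p_def q_def w_def by (rule main_bound[OF a0 re im])
  have p1: "1 \<le> cmod (1 + p)" by (rule one_plus_ge[OF rp])
  have q1: "1 \<le> cmod (1 + q)" by (rule one_plus_ge[OF rq])
  have c0: "0 \<le> cc" by (simp add: cc_def)
  have s2: "1 + cc \<le> sqrt 2" by (rule sqrt2_ge)
  have A: "cmod (1 + q) \<le> sqrt 2 * cmod (1 + p)"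
  proof -
    have "cmod (1 + q) \<le> cmod (1 + p) + cmod (q - p)"
      using norm_triangle_ineq[of "1+p" "q-p"] by simp
    also have "cmod (q - p) \<le> cc" using pq by (simp add: norm_minus_commute)
    also have "cmod (1 + p) + cc \<le> cmod (1 + p) + cc * cmod (1 + p)" using p1 c0 by (simp add: mult_left_mono[of 1 _ cc, simplified])
    also have "\<dots> = (1 + cc) * cmod (1 + p)" by (simp add: algebra_simps)
    also have "\<dots> \<le> sqrt 2 * cmod (1 + p)" using s2 by (intro mult_right_mono) auto
    finally show ?thesis by simp
  qed
  have B: "cmod (1 + p) \<le> sqrt 2 * cmod (1 + q)"
  proof -
    have "cmod (1 + p) \<le> cmod (1 + q) + cmod (p - q)"
      using norm_triangle_ineq[of "1+q" "p-q"] by simp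
    also have "cmod (p - q) \<le> cc" using pq by simp
    also have "cmod (1 + q) + cc \<le> cmod (1 + q) + cc * cmod (1 + q)" using q1 c0 by (simp add: mult_left_mono[of 1 _ cc, simplified])
    also have "\<dots> = (1 + cc) * cmod (1 + q)" by (simp add: algebra_simps)
    also have "\<dots> \<le> sqrt 2 * cmod (1 + q)" using s2 by (intro mult_right_mono) auto
    finally show ?thesis by simp
  qed
  have ea: "cmod (a/(1+a)) = 1 / cmod (1 + q)" unfolding q_def by (rule cmod_frac[OF a0])
  have ew: "cmod (w/(1+w)) = 1 / cmod (1 + p)" unfolding p_def by (rule cmod_frac[OF w0])
  have P: "0 < cmod (1 + p)" "0 < cmod (1 + q)" using p1 q1 by auto
  have r2: "0 < sqrt (2::real)" by simp
  show ?thesis unfolding ea ew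
  proof
    show "1 / sqrt 2 * (1 / cmod (1 + p)) \<le> 1 / cmod (1 + q)"
      using A P r2 by (simp add: field_simps)
    show "1 / cmod (1 + q) \<le> sqrt 2 * (1 / cmod (1 + p))"
      using B P r2 by (simp add: field_simps)
  qed
qed

lemma re_exp_pos: "\<bar>Im z\<bar> < pi/2 \<Longrightarrow> 0 < Re (exp z)" for z :: complex
  by (simp add: Re_exp cos_gt_zero_pi abs_less_iff)

lemma Re_le_norm_sinh: "Re a \<le> cmod (sinh a)" if "0 \<le> Re a" for a :: complex
proof -
  have "(Re a)^2 \<le> sinh (Re a)^2 + sin (Im a)^2" using a2[OF a1[OF that] that] .
  then have "(Re a)^2 \<le> cmod (sinh a)^2" by (subst norm_sinh_sq)
  then show ?thesis by (rule power2_le_imp_le) simp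
qed

lemma boundary_limit:
  fixes \<zeta> :: complex
  assumes bd: "\<bar>Im \<zeta>\<bar> = pi/2"
  defines "St \<equiv> {z::complex. \<bar>Im z\<bar> < pi/2}"
  shows "\<exists>L. 0 \<le> Re L \<and> \<bar>Im L\<bar> \<le> pi/2 \<and> sinh L = exp \<zeta> \<and>
             ((\<lambda>z. arsinh (exp z)) \<longlongrightarrow> L) (at \<zeta> within St) \<and> \<not> trivial_limit (at \<zeta> within St)"
proof -
  define M where "M = cmod (exp \<zeta>) + 1"
  define K where "K = cbox (Complex 0 (-pi/2)) (Complex M (pi/2))"
  have KH: "K \<subseteq> H" unfolding K_def H_def by (auto simp: in_cbox_complex_iff abs_le_iff)
  have cK: "compact K" unfolding K_def by (rule compact_cbox)
  have sK: "continuous_on K sinh" by (intro continuous_intros)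
  have iK: "inj_on sinh K" using sinh_inj_H KH by (rule inj_on_subset)
  define \<phi> where "\<phi> = the_inv_into K sinh"
  have c\<phi>: "continuous_on (sinh ` K) \<phi>" unfolding \<phi>_def by (rule continuous_on_inv_into[OF sK cK iK])
  have ntriv: "\<not> trivial_limit (at \<zeta> within St)"
    unfolding trivial_limit_within islimpt_approachable
  proof (intro allI impI notI)
    assume "\<not> (\<forall>e>0. \<exists>x'\<in>St. x' \<noteq> \<zeta> \<and> dist x' \<zeta> < e)"
    then obtain e where e: "e > 0" and no: "\<And>x'. x' \<in> St \<Longrightarrow> x' \<noteq> \<zeta> \<Longrightarrow> \<not> dist x' \<zeta> < e" by auto
    define d where "d = min (e/2) 1"
    have d: "0 < d" "d < e" "d \<le> 1" using e by (auto simp: d_def)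
    define x' where "x' = \<zeta> - \<i> * complex_of_real (sgn (Im \<zeta>) * d)"
    have sg: "sgn (Im \<zeta>) = 1 \<or> sgn (Im \<zeta>) = -1" using bd pi_gt_zero by (auto simp: sgn_if)
    have "\<bar>Im x'\<bar> < pi/2" using sg bd d pi_gt3 by (auto simp: x'_def sgn_if split: if_splits)
    moreover have "x' \<noteq> \<zeta>" using sg d by (auto simp: x'_def complex_eq_iff)
    moreover have "dist x' \<zeta> < e" using sg d by (auto simp: x'_def dist_norm norm_mult)
    ultimately show False using no by (auto simp: St_def)
  qed
  have le: "((\<lambda>z. exp z) \<longlongrightarrow> exp \<zeta>) (at \<zeta> within St)" by (intro tendsto_intros)
  have ev1: "eventually (\<lambda>z. dist (exp z) (exp \<zeta>) < 1) (at \<zeta> within St)" by (rule tendstoD[OF le]) simp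
  have ev2: "eventually (\<lambda>z. z \<in> St) (at \<zeta> within St)" by (simp add: eventually_at_filter)
  have good: "arsinh (exp z) \<in> K \<and> sinh (arsinh (exp z)) = exp z" if "z \<in> St" "dist (exp z) (exp \<zeta>) < 1" for z
  proof -
    have rp: "0 < Re (exp z)" using that(1) by (intro re_exp_pos) (simp add: St_def)
    note P = arsinh_props[OF rp]
    have "Re (arsinh (exp z)) \<le> cmod (sinh (arsinh (exp z)))" using P(3) by (intro Re_le_norm_sinh) simp
    also have "\<dots> = cmod (exp z)" using P(1) by simp
    also have "\<dots> \<le> cmod (exp \<zeta>) + cmod (exp z - exp \<zeta>)" using norm_triangle_ineq[of "exp \<zeta>" "exp z - exp \<zeta>"] by simp
    also have "\<dots> \<le> M" using that(2) by (simp add: M_def dist_norm)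
    finally have "Re (arsinh (exp z)) \<le> M" .
    then show ?thesis using P by (auto simp: K_def in_cbox_complex_iff abs_less_iff)
  qed
  have ev: "eventually (\<lambda>z. arsinh (exp z) \<in> K \<and> sinh (arsinh (exp z)) = exp z) (at \<zeta> within St)"
    using ev1 ev2 by eventually_elim (use good in auto)
  have evK: "eventually (\<lambda>z. exp z \<in> sinh ` K) (at \<zeta> within St)"
    using ev by eventually_elim (metis image_eqI)
  have clK: "closed (sinh ` K)" by (intro compact_imp_closed compact_continuous_image sK cK)
  have mem: "exp \<zeta> \<in> sinh ` K" using Lim_in_closed_set[OF clK evK _ le] ntriv by simp
  have l\<phi>: "((\<lambda>z. \<phi> (exp z)) \<longlongrightarrow> \<phi> (exp \<zeta>)) (at \<zeta> within St)"
    by (rule continuous_on_tendsto_compose[OF c\<phi> le mem evK])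
  have ev3: "eventually (\<lambda>z. \<phi> (exp z) = arsinh (exp z)) (at \<zeta> within St)"
    using ev by eventually_elim (metis \<phi>_def the_inv_into_f_f[OF iK])
  have lim: "((\<lambda>z. arsinh (exp z)) \<longlongrightarrow> \<phi> (exp \<zeta>)) (at \<zeta> within St)"
    by (rule Lim_transform_eventually[OF l\<phi> ev3])
  have LK: "\<phi> (exp \<zeta>) \<in> K" unfolding \<phi>_def using iK mem by (rule the_inv_into_into) simp
  have sL: "sinh (\<phi> (exp \<zeta>)) = exp \<zeta>" unfolding \<phi>_def using iK mem by (rule f_the_inv_into_f)
  show ?thesis using LK KH sL lim ntriv by (intro exI[of _ "\<phi> (exp \<zeta>)"]) (auto simp: H_def)
qed

lemma arcsinh_exp_props:
  fixes \<zeta> :: complex assumes "\<bar>Im \<zeta>\<bar> \<le> pi/2"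
  shows "0 \<le> Re (arcsinh_exp \<zeta>) \<and> \<bar>Im (arcsinh_exp \<zeta>)\<bar> \<le> pi/2 \<and> sinh (arcsinh_exp \<zeta>) = exp \<zeta>"
proof (cases "\<bar>Im \<zeta>\<bar> < pi/2")
  case True
  then have e: "arcsinh_exp \<zeta> = arsinh (exp \<zeta>)" by (simp add: arcsinh_exp_def)
  have rp: "0 < Re (exp \<zeta>)" using True by (rule re_exp_pos)
  show ?thesis unfolding e using arsinh_props[OF rp] by auto
next
  case False
  then have bd: "\<bar>Im \<zeta>\<bar> = pi/2" using assms by simp
  obtain L where L: "0 \<le> Re L" "\<bar>Im L\<bar> \<le> pi/2" "sinh L = exp \<zeta>"
    and lim: "((\<lambda>z. arsinh (exp z)) \<longlongrightarrow> L) (at \<zeta> within {z::complex. \<bar>Im z\<bar> < pi/2})"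
    and nt: "\<not> trivial_limit (at \<zeta> within {z::complex. \<bar>Im z\<bar> < pi/2})"
    using boundary_limit[OF bd] by blast
  have "arcsinh_exp \<zeta> = L" unfolding arcsinh_exp_def using False tendsto_Lim[OF nt lim] by simp
  then show ?thesis using L by simp
qed

lemma real_part: "arsinh (exp x) / (1 + arsinh (exp x)) \<le> exp x / (1 + exp x)" for x :: real
proof -
  define y where "y = arsinh (exp x)"
  have y0: "0 < y" by (simp add: y_def)
  have "y \<le> sinh y" using a1[of y] y0 by simp
  then have ye: "y \<le> exp x" by (simp add: y_def)
  have "y / (1 + y) \<le> exp x / (1 + exp x)" using y0 ye
    by (simp add: field_simps add_pos_pos)
  then show ?thesis by (simp add: y_def)
qed

theorem lemma4:
  shows "(\<forall>\<zeta>::complex. \<bar>Im \<zeta>\<bar> \<le> pi / 2 \<longrightarrow>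
            (1 / sqrt 2) * cmod (exp \<zeta> / (1 + exp \<zeta>))
              \<le> cmod (arcsinh_exp \<zeta> / (1 + arcsinh_exp \<zeta>))
          \<and> cmod (arcsinh_exp \<zeta> / (1 + arcsinh_exp \<zeta>))
              \<le> sqrt 2 * cmod (exp \<zeta> / (1 + exp \<zeta>)))
       \<and> (\<forall>x::real. arsinh (exp x) / (1 + arsinh (exp x)) \<le> exp x / (1 + exp x))"
proof (intro conjI allI impI)
  fix x :: real show "arsinh (exp x) / (1 + arsinh (exp x)) \<le> exp x / (1 + exp x)" by (rule real_part)
next
  fix \<zeta> :: complex assume h: "\<bar>Im \<zeta>\<bar> \<le> pi / 2"
  define a where "a = arcsinh_exp \<zeta>"
  have P: "0 \<le> Re a" "\<bar>Im a\<bar> \<le> pi/2" "sinh a = exp \<zeta>" using arcsinh_exp_props[OF h] by (auto simp: a_def)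
  have a0: "a \<noteq> 0" using P(3) by auto
  have I: "(1 / sqrt 2) * cmod (exp \<zeta>/(1+exp \<zeta>)) \<le> cmod (a/(1+a)) \<and> cmod (a/(1+a)) \<le> sqrt 2 * cmod (exp \<zeta>/(1+exp \<zeta>))"
    using ineq_H[OF a0 P(1) P(2)] unfolding P(3) .
  show "(1 / sqrt 2) * cmod (exp \<zeta> / (1 + exp \<zeta>)) \<le> cmod (arcsinh_exp \<zeta> / (1 + arcsinh_exp \<zeta>))"
    using I unfolding a_def by simp
  show "cmod (arcsinh_exp \<zeta> / (1 + arcsinh_exp \<zeta>)) \<le> sqrt 2 * cmod (exp \<zeta> / (1 + exp \<zeta>))"
    using I unfolding a_def by simp
qed

end
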